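(* Let $G$ be a graph, $\mathcal H$ a non-piercing family of subgraphs of $G$, and $(T,\{B_z\}_{z\in V(T)})$ a tree decomposition of $G$ with $T$ rooted. Let $\{x,y\}\in E(T)$ with $x$ a child of $y$, and let $A=A_{xy}=B_x\cap B_y$. Let $H,H'\in\mathcal H$ with $V(H)\cap A\ne\emptyset\ne V(H')\cap A$. Then: (i) if $H\cap A=H'\cap A$ and $H|_x\subsetneq H'|_x$, then $H'|_{-x}\subseteq H|_{-x}$; (ii) if $H\cap A=H'\cap A$ and $H|_x, H'|_x$ properly intersect, then $H|_{-x}=H'|_{-x}$; (iii) if $H\cap A\subsetneq H'\cap A$ and $H|_x,H'|_x$ properly intersect, then $H|_{-x}\subseteq H'|_{-x}$.
   Context: All graphs are finite and simple. A subgraph $H$ of a graph $G$ is identified with its vertex set $V(H)$ (subgraphs are taken to be induced). A family $\mathcal H$ of subgraphs of $G$ is non-piercing if every $H\in\mathcal H$ induces a connected subgraph of $G$ and, for all $H,H'\in\mathcal H$, the induced subgraph $G[V(H)\setminus V(H')]$ is connected (an empty vertex set is regarded as connected). For a node $x$ of the rooted tree $T$, $T_x$ is the subtree rooted at $x$, $G_x$ is the subgraph of $G$ induced on $\bigcup_{z\in V(T_x)}B_z$, and $G_{-x}$ is the subgraph induced on $V(G)\setminus V(G_x)$. For a subgraph $H$, $H|_x=V(H)\cap V(G_x)$ and $H|_{-x}=V(H)\cap V(G_{-x})$. Two sets $X,Y$ properly intersect if $X\setminus Y\ne\emptyset$ and $Y\setminus X\ne\emptyset$. *)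

theory Defs
  imports Main
begin

definition simple_graph :: "'a set \<Rightarrow> ('a \<Rightarrow> 'a \<Rightarrow> bool) \<Rightarrow> bool" where
  "simple_graph V E \<longleftrightarrow> finite V \<and> (\<forall>u v. E u v \<longrightarrow> E v u) \<and> (\<forall>u. \<not> E u u)
     \<and> (\<forall>u v. E u v \<longrightarrow> u \<in> V \<and> v \<in> V)"

definition walk_in :: "('a \<Rightarrow> 'a \<Rightarrow> bool) \<Rightarrow> 'a set \<Rightarrow> 'a list \<Rightarrow> bool" where
  "walk_in E S xs \<longleftrightarrow> xs \<noteq> [] \<and> set xs \<subseteq> S \<and>
     (\<forall>i < length xs - 1. E (xs ! i) (xs ! Suc i))"

text \<open>The induced subgraph on S is connected (the empty set counts as connected).\<close>
definition connected_set :: "('a \<Rightarrow> 'a \<Rightarrow> bool) \<Rightarrow> 'a set \<Rightarrow> bool" where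
  "connected_set E S \<longleftrightarrow>
     (\<forall>u\<in>S. \<forall>v\<in>S. \<exists>xs. walk_in E S xs \<and> hd xs = u \<and> last xs = v)"

definition is_tree :: "'b set \<Rightarrow> ('b \<Rightarrow> 'b \<Rightarrow> bool) \<Rightarrow> bool" where
  "is_tree VT ET \<longleftrightarrow> simple_graph VT ET \<and> VT \<noteq> {} \<and> connected_set ET VT \<and>
     (\<forall>u v. ET u v \<longrightarrow>
        \<not> (\<exists>xs. walk_in (\<lambda>a b. ET a b \<and> {a, b} \<noteq> {u, v}) VT xs \<and> hd xs = u \<and> last xs = v))"

text \<open>Subtree T_x of the tree rooted at r: the nodes z such that every walk from z to the
  root passes through x (the descendants of x, including x).\<close>
definition subtree_nodes :: "'b set \<Rightarrow> ('b \<Rightarrow> 'b \<Rightarrow> bool) \<Rightarrow> 'b \<Rightarrow> 'b \<Rightarrow> 'b set" where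
  "subtree_nodes VT ET r x = {z \<in> VT. \<forall>xs. walk_in ET VT xs \<and> hd xs = z \<and> last xs = r \<longrightarrow> x \<in> set xs}"

definition is_child :: "'b set \<Rightarrow> ('b \<Rightarrow> 'b \<Rightarrow> bool) \<Rightarrow> 'b \<Rightarrow> 'b \<Rightarrow> 'b \<Rightarrow> bool" where
  "is_child VT ET r x y \<longleftrightarrow> ET x y \<and> x \<in> subtree_nodes VT ET r y"

definition tree_decomposition ::
  "'a set \<Rightarrow> ('a \<Rightarrow> 'a \<Rightarrow> bool) \<Rightarrow> 'b set \<Rightarrow> ('b \<Rightarrow> 'b \<Rightarrow> bool) \<Rightarrow> ('b \<Rightarrow> 'a set) \<Rightarrow> bool" where
  "tree_decomposition V E VT ET B \<longleftrightarrow> is_tree VT ET \<and>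
     (\<forall>z\<in>VT. B z \<subseteq> V) \<and> (\<Union>z\<in>VT. B z) = V \<and>
     (\<forall>u v. E u v \<longrightarrow> (\<exists>z\<in>VT. u \<in> B z \<and> v \<in> B z)) \<and>
     (\<forall>v\<in>V. connected_set ET {z \<in> VT. v \<in> B z})"

definition Gx :: "'b set \<Rightarrow> ('b \<Rightarrow> 'b \<Rightarrow> bool) \<Rightarrow> ('b \<Rightarrow> 'a set) \<Rightarrow> 'b \<Rightarrow> 'b \<Rightarrow> 'a set" where
  "Gx VT ET B r x = (\<Union>z\<in>subtree_nodes VT ET r x. B z)"

definition Gmx :: "'a set \<Rightarrow> 'b set \<Rightarrow> ('b \<Rightarrow> 'b \<Rightarrow> bool) \<Rightarrow> ('b \<Rightarrow> 'a set) \<Rightarrow> 'b \<Rightarrow> 'b \<Rightarrow> 'a set" where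
  "Gmx V VT ET B r x = V - Gx VT ET B r x"

definition non_piercing :: "'a set \<Rightarrow> ('a \<Rightarrow> 'a \<Rightarrow> bool) \<Rightarrow> 'a set set \<Rightarrow> bool" where
  "non_piercing V E \<H> \<longleftrightarrow>
     (\<forall>H\<in>\<H>. H \<subseteq> V \<and> connected_set E H) \<and>
     (\<forall>H\<in>\<H>. \<forall>H'\<in>\<H>. connected_set E (H - H'))"

definition properly_intersect :: "'a set \<Rightarrow> 'a set \<Rightarrow> bool" where
  "properly_intersect X Y \<longleftrightarrow> X - Y \<noteq> {} \<and> Y - X \<noteq> {}"

end

theory Submission
  imports Defs
begin

lemma walk_Cons: "walk_in E S (a#xs) \<longleftrightarrow> a \<in> S \<and> (xs = [] \<or> (E a (hd xs) \<and> walk_in E S xs))"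
proof (cases xs)
  case Nil then show ?thesis by (simp add: walk_in_def)
next
  case (Cons b ys)
  have "(\<forall>i<length (a#b#ys) - 1. E ((a#b#ys) ! i) ((a#b#ys) ! Suc i)) \<longleftrightarrow>
        E a b \<and> (\<forall>i<length (b#ys) - 1. E ((b#ys) ! i) ((b#ys) ! Suc i))"
    by (auto simp: less_Suc_eq_0_disj)
  then show ?thesis using Cons by (auto simp: walk_in_def)
qed

lemma walk_mono: "walk_in E S xs \<Longrightarrow> (\<And>a b. a \<in> set xs \<Longrightarrow> b \<in> set xs \<Longrightarrow> E a b \<Longrightarrow> E' a b) \<Longrightarrow> S \<subseteq> S' \<Longrightarrow> walk_in E' S' xs"
  unfolding walk_in_def by (auto; metis Suc_lessD less_diff_conv nth_mem add.commute plus_1_eq_Suc)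

lemma walk_take: "walk_in E S p \<Longrightarrow> k < length p \<Longrightarrow> walk_in E S (take (Suc k) p)"
  unfolding walk_in_def by (auto dest: in_set_takeD)

lemma cross: "xs \<noteq> [] \<Longrightarrow> P (hd xs) \<Longrightarrow> \<not> P (last xs) \<Longrightarrow> \<exists>i < length xs - 1. P (xs!i) \<and> \<not> P (xs ! Suc i)"
proof (induction xs)
  case Nil then show ?case by simp
next
  case (Cons a xs)
  show ?case
  proof (cases xs)
    case Nil then show ?thesis using Cons by simp
  next
    case (Cons b ys)
    show ?thesis
    proof (cases "P b")
      case True
      then obtain i where "i < length xs - 1" "P (xs!i)" "\<not> P (xs ! Suc i)"
        using Cons.IH Cons.prems Cons by auto
      then show ?thesis by (intro exI[of _ "Suc i"]) (auto simp: Cons)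
    next
      case False then show ?thesis using Cons.prems Cons by (intro exI[of _ 0]) auto
    qed
  qed
qed

lemma walk_hd_last: "walk_in E S xs \<Longrightarrow> hd xs \<in> S \<and> last xs \<in> S"
  unfolding walk_in_def by auto

lemma sub_self: "x \<in> VT \<Longrightarrow> x \<in> subtree_nodes VT ET r x"
  unfolding subtree_nodes_def walk_in_def by auto

lemma sub_VT: "z \<in> subtree_nodes VT ET r x \<Longrightarrow> z \<in> VT"
  unfolding subtree_nodes_def by auto

lemma notsub: "z \<in> VT \<Longrightarrow> z \<notin> subtree_nodes VT ET r x \<Longrightarrow>
   \<exists>p. walk_in ET VT p \<and> hd p = z \<and> last p = r \<and> x \<notin> set p"
  unfolding subtree_nodes_def by auto

lemma edge_exit:
  assumes "ET a b" "a \<in> subtree_nodes VT ET r x" "b \<in> VT" "b \<notin> subtree_nodes VT ET r x"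
  shows "a = x"
proof -
  obtain p where p: "walk_in ET VT p" "hd p = b" "last p = r" "x \<notin> set p"
    using notsub[OF assms(3,4)] by blast
  have "p \<noteq> []" using p(1) by (simp add: walk_in_def)
  have "walk_in ET VT (a#p)" using p `p \<noteq> []` assms sub_VT by (auto simp: walk_Cons)
  moreover have "last (a#p) = r" using p `p \<noteq> []` by simp
  ultimately have "x \<in> set (a#p)" using assms(2) unfolding subtree_nodes_def by force
  then show ?thesis using p(4) by auto
qed

lemma exit_y:
  assumes tree: "is_tree VT ET" and ch: "is_child VT ET r x y"
    and "ET x b" "b \<in> VT" "b \<notin> subtree_nodes VT ET r x"
  shows "b = y"
proof (rule ccontr)
  assume bny: "b \<noteq> y"
  have sg: "simple_graph VT ET" using tree by (simp add: is_tree_def)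
  have xy: "ET x y" and xsub: "x \<in> subtree_nodes VT ET r y" using ch by (auto simp: is_child_def)
  have xVT: "x \<in> VT" using sg xy by (auto simp: simple_graph_def)
  have xny: "x \<noteq> y" using sg xy by (auto simp: simple_graph_def)
  obtain p where p: "walk_in ET VT p" "hd p = b" "last p = r" "x \<notin> set p"
    using notsub[OF assms(4,5)] by blast
  have pne: "p \<noteq> []" using p(1) by (simp add: walk_in_def)
  have "walk_in ET VT (x#p)" using p pne assms xVT by (auto simp: walk_Cons)
  moreover have "last (x#p) = r" using p pne by simp
  ultimately have "y \<in> set (x#p)" using xsub unfolding subtree_nodes_def by force
  then have "y \<in> set p" using xny by auto
  then obtain k where k: "k < length p" "p ! k = y" by (auto simp: in_set_conv_nth)
  define q where "q = take (Suc k) p"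
  have q1: "walk_in ET VT q" unfolding q_def by (rule walk_take[OF p(1) k(1)])
  have q5: "q \<noteq> []" using q1 by (simp add: walk_in_def)
  have q2: "hd q = b" unfolding q_def using p(2) pne by (simp add: hd_take)
  have lq: "length q = Suc k" unfolding q_def using k by simp
  have q3: "last q = y" using last_conv_nth[OF q5] lq k unfolding q_def by simp
  have q4: "x \<notin> set q" unfolding q_def using p(4) by (meson in_set_takeD)
  note q = q1 q2 q3 q4 q5
  let ?E' = "\<lambda>a b. ET a b \<and> {a, b} \<noteq> {x, y}"
  have "walk_in ?E' VT q"
    by (rule walk_mono[OF q(1)]) (use q(4) in \<open>auto simp: doubleton_eq_iff\<close>)
  then have w: "walk_in ?E' VT (x#q)"
    using q xVT assms(3) bny xny by (auto simp: walk_Cons doubleton_eq_iff)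
  have "\<not> (\<exists>xs. walk_in ?E' VT xs \<and> hd xs = x \<and> last xs = y)"
    using tree xy unfolding is_tree_def by blast
  with w q show False by force
qed

lemma key:
  assumes sg: "simple_graph V E" and td: "tree_decomposition V E VT ET B"
    and ch: "is_child VT ET r x y"
    and "E u v" "u \<in> Gx VT ET B r x" "v \<notin> Gx VT ET B r x"
  shows "u \<in> B x \<inter> B y"
proof -
  have tree: "is_tree VT ET" using td by (simp add: tree_decomposition_def)
  obtain z where z: "z \<in> VT" "u \<in> B z" "v \<in> B z" using td assms(4) unfolding tree_decomposition_def by blast
  have zn: "z \<notin> subtree_nodes VT ET r x" using z assms(6) by (auto simp: Gx_def)
  obtain z' where z': "z' \<in> subtree_nodes VT ET r x" "u \<in> B z'" using assms(5) by (auto simp: Gx_def)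
  have uV: "u \<in> V" using sg assms(4) by (auto simp: simple_graph_def)
  have "connected_set ET {t \<in> VT. u \<in> B t}" using td uV by (auto simp: tree_decomposition_def)
  moreover have "z' \<in> {t \<in> VT. u \<in> B t}" "z \<in> {t \<in> VT. u \<in> B t}" using z z' sub_VT by auto
  ultimately obtain w where w: "walk_in ET {t \<in> VT. u \<in> B t} w" "hd w = z'" "last w = z"
    unfolding connected_set_def by meson
  have wne: "w \<noteq> []" using w by (simp add: walk_in_def)
  obtain i where i: "i < length w - 1" "w!i \<in> subtree_nodes VT ET r x" "w ! Suc i \<notin> subtree_nodes VT ET r x"
    using cross[OF wne, of "\<lambda>t. t \<in> subtree_nodes VT ET r x"] w z' zn by auto
  have e: "ET (w!i) (w!Suc i)" using w(1) i(1) by (simp add: walk_in_def)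
  have inw: "w!i \<in> set w" "w!Suc i \<in> set w" using i(1) by (simp_all add: nth_mem)
  have sw: "set w \<subseteq> {t \<in> VT. u \<in> B t}" using w(1) by (simp add: walk_in_def)
  have "w!i = x" using edge_exit[OF e i(2) _ i(3)] inw sw by auto
  moreover have "w!Suc i = y" using exit_y[OF tree ch _ _ i(3)] e inw sw `w!i = x` by auto
  ultimately show ?thesis using inw sw by auto
qed

lemma key2:
  assumes sg: "simple_graph V E" and td: "tree_decomposition V E VT ET B"
    and ch: "is_child VT ET r x y"
    and S: "connected_set E S" "S \<subseteq> V" and u: "u \<in> S" "u \<in> Gx VT ET B r x"
    and v: "v \<in> S" "v \<notin> Gx VT ET B r x"
  shows "\<exists>w \<in> S. w \<in> B x \<inter> B y"
proof -
  obtain p where p: "walk_in E S p" "hd p = u" "last p = v" using S u v unfolding connected_set_def by blast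
  have pne: "p \<noteq> []" using p by (simp add: walk_in_def)
  obtain i where i: "i < length p - 1" "p!i \<in> Gx VT ET B r x" "p ! Suc i \<notin> Gx VT ET B r x"
    using cross[OF pne, of "\<lambda>t. t \<in> Gx VT ET B r x"] p u v by auto
  have e: "E (p!i) (p!Suc i)" using p(1) i(1) by (simp add: walk_in_def)
  have "p!i \<in> S" using p(1) i(1) by (simp add: walk_in_def subset_iff)
  then show ?thesis using key[OF sg td ch e i(2,3)] by blast
qed

theorem mainTheorem8:
  fixes V :: "'a set" and E :: "'a \<Rightarrow> 'a \<Rightarrow> bool"
    and VT :: "'b set" and ET :: "'b \<Rightarrow> 'b \<Rightarrow> bool" and B :: "'b \<Rightarrow> 'a set"
    and r x y :: 'b and \<H> :: "'a set set" and H H' :: "'a set"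
  assumes "simple_graph V E"
    and "non_piercing V E \<H>"
    and "tree_decomposition V E VT ET B"
    and "r \<in> VT"
    and "is_child VT ET r x y"
    and "H \<in> \<H>" and "H' \<in> \<H>"
    and "H \<inter> (B x \<inter> B y) \<noteq> {}" and "H' \<inter> (B x \<inter> B y) \<noteq> {}"
  shows
    "(H \<inter> (B x \<inter> B y) = H' \<inter> (B x \<inter> B y) \<and> H \<inter> Gx VT ET B r x \<subset> H' \<inter> Gx VT ET B r x
        \<longrightarrow> H' \<inter> Gmx V VT ET B r x \<subseteq> H \<inter> Gmx V VT ET B r x)
     \<and> (H \<inter> (B x \<inter> B y) = H' \<inter> (B x \<inter> B y)
          \<and> properly_intersect (H \<inter> Gx VT ET B r x) (H' \<inter> Gx VT ET B r x)
        \<longrightarrow> H \<inter> Gmx V VT ET B r x = H' \<inter> Gmx V VT ET B r x)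
     \<and> (H \<inter> (B x \<inter> B y) \<subset> H' \<inter> (B x \<inter> B y)
          \<and> properly_intersect (H \<inter> Gx VT ET B r x) (H' \<inter> Gx VT ET B r x)
        \<longrightarrow> H \<inter> Gmx V VT ET B r x \<subseteq> H' \<inter> Gmx V VT ET B r x)"
proof -
  let ?A = "B x \<inter> B y" and ?G = "Gx VT ET B r x" and ?M = "Gmx V VT ET B r x"
  have np: "\<And>K K'. K \<in> \<H> \<Longrightarrow> K' \<in> \<H> \<Longrightarrow> connected_set E (K - K')"
    and sub: "\<And>K. K \<in> \<H> \<Longrightarrow> K \<subseteq> V"
    using assms(2) unfolding non_piercing_def by auto
  have cr: "\<exists>w. w \<in> K - K' \<and> w \<in> ?A"
    if "K \<in> \<H>" "K' \<in> \<H>" "u \<in> K - K'" "u \<in> ?G" "v \<in> K - K'" "v \<notin> ?G" for K K' u v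
    using key2[OF assms(1,3,5) np[OF that(1,2)] _ that(3,4,5,6)] sub[OF that(1)] by blast
  have M: "?M = V - ?G" by (simp add: Gmx_def)
  show ?thesis
  proof (intro conjI impI)
    assume a: "H \<inter> ?A = H' \<inter> ?A \<and> H \<inter> ?G \<subset> H' \<inter> ?G"
    then obtain u where u: "u \<in> H' - H" "u \<in> ?G" by blast
    show "H' \<inter> ?M \<subseteq> H \<inter> ?M"
    proof
      fix v assume v: "v \<in> H' \<inter> ?M"
      show "v \<in> H \<inter> ?M"
      proof (rule ccontr)
        assume "v \<notin> H \<inter> ?M"
        then have "v \<in> H' - H" "v \<notin> ?G" using v M by auto
        then show False using cr[OF assms(7,6) u] a by blast
      qed
    qed
  next
    assume a: "H \<inter> ?A = H' \<inter> ?A \<and> properly_intersect (H \<inter> ?G) (H' \<inter> ?G)"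
    obtain u where u: "u \<in> H' - H" "u \<in> ?G" using a unfolding properly_intersect_def by blast
    obtain u' where u': "u' \<in> H - H'" "u' \<in> ?G" using a unfolding properly_intersect_def by blast
    show "H \<inter> ?M = H' \<inter> ?M"
    proof (rule ccontr)
      assume "H \<inter> ?M \<noteq> H' \<inter> ?M"
      then obtain v where "(v \<in> H' - H \<or> v \<in> H - H') \<and> v \<notin> ?G" using M by blast
      then show False using cr[OF assms(7,6) u] cr[OF assms(6,7) u'] a by blast
    qed
  next
    assume a: "H \<inter> ?A \<subset> H' \<inter> ?A \<and> properly_intersect (H \<inter> ?G) (H' \<inter> ?G)"
    obtain u' where u': "u' \<in> H - H'" "u' \<in> ?G" using a unfolding properly_intersect_def by blast
    show "H \<inter> ?M \<subseteq> H' \<inter> ?M"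
    proof
      fix v assume v: "v \<in> H \<inter> ?M"
      show "v \<in> H' \<inter> ?M"
      proof (rule ccontr)
        assume "v \<notin> H' \<inter> ?M"
        then have "v \<in> H - H'" "v \<notin> ?G" using v M by auto
        then show False using cr[OF assms(6,7) u'] a by blast
      qed
    qed
  qed
qed

end
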